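(* Let $h>0$, $n\in\mathbb{N}$, and let $\lambda:\mathbb{T}\to\mathbb{R}$ be an $n$-cycle with values $\lambda_0,\dots,\lambda_{n-1}\in\mathbb{R}\setminus\{\pm\tfrac1h\}$, such that $0<|e_{\lambda}(nh)|\neq1$ and $0<|e_{-\lambda}(nh)|\neq1$. Then the discrete Hill-type equation $$\Delta_h^2 y(t)+\bigl[\Delta_h\lambda(t)-\lambda(t)\lambda(t+h)\bigr]y(t)=0,\qquad t\in\mathbb{T},$$ has Hyers–Ulam stability on $\mathbb{T}$ with Hyers–Ulam stability constant $K=K_0(\lambda)K_0(-\lambda)$.
   Context: Fix $h>0$ and let $\mathbb{T}=\{0,h,2h,3h,\dots\}$. For $x:\mathbb{T}\to\mathbb{R}$, $\Delta_h x(t)=\frac{x(t+h)-x(t)}{h}$ and $\Delta_h^2x=\Delta_h(\Delta_h x)$, $\Delta_h^3x=\Delta_h(\Delta_h^2 x)$. An $n$-cycle is a function $\mu:\mathbb{T}\to\mathbb{R}$ with $\mu(t)=\mu_k$ whenever $t/h\equiv k\pmod n$, $k\in\{0,\dots,n-1\}$, which has period $n$ and no smaller period. For such $\mu$ define the discrete exponential $e_\mu(t)=\prod_{k=0}^{t/h-1}(1+h\mu(kh))$ (empty product $=1$), so $e_\mu(nh)=\prod_{k=0}^{n-1}(1+h\mu_k)$. For $k\in\{0,\dots,n-1\}$ define $$S_k(\mu)=\sum_{j=1}^{n}\prod_{i=0}^{j-1}\frac{1}{|1+h\mu_{(k+i)\bmod n}|},$$ (e.g. $S_0(\mu)=\frac{1}{|1+h\mu_0|}+\frac{1}{|1+h\mu_0||1+h\mu_1|}+\dots+\frac{1}{|1+h\mu_0|\cdots|1+h\mu_{n-1}|}$),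 and, when $0<|e_\mu(nh)|\neq1$, $$K_0(\mu)=\frac{h|e_\mu(nh)|}{\bigl|1-|e_\mu(nh)|\bigr|}\max\{S_0(\mu),\dots,S_{n-1}(\mu)\}.$$ Here $-\lambda$ denotes the $n$-cycle with values $-\lambda_0,\dots,-\lambda_{n-1}$. Hyers–Ulam stability: an equation $\mathcal{L}[y](t)=f(t)$, $t\in\mathbb{T}$ (with $\mathcal{L}$ a linear difference operator) has Hyers–Ulam stability on $\mathbb{T}$ with Hyers–Ulam stability constant $K>0$ if for every $\varepsilon>0$ and every $\xi:\mathbb{T}\to\mathbb{R}$ with $|\mathcal{L}[\xi](t)-f(t)|\le\varepsilon$ for all $t\in\mathbb{T}$, there is a solution $y:\mathbb{T}\to\mathbb{R}$ of the equation with $|\xi(t)-y(t)|\le K\varepsilon$ for all $t\in\mathbb{T}$. The minimum Hyers–Ulam stability constant is the smallest such $K$. *)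

theory Defs
  imports "HOL-Analysis.Analysis"
begin

text \<open>Functions on T = {0,h,2h,...} are represented as functions nat => real,
  the argument m standing for the point t = m*h.\<close>

definition delta_h :: "real \<Rightarrow> (nat \<Rightarrow> real) \<Rightarrow> nat \<Rightarrow> real" where
  "delta_h h x m = (x (Suc m) - x m) / h"

definition is_n_cycle :: "nat \<Rightarrow> (nat \<Rightarrow> real) \<Rightarrow> bool" where
  "is_n_cycle n mu \<longleftrightarrow> n \<ge> 1 \<and> (\<forall>m. mu (m + n) = mu m) \<and>
     (\<forall>p. 0 < p \<and> p < n \<longrightarrow> \<not> (\<forall>m. mu (m + p) = mu m))"

definition dexp :: "real \<Rightarrow> (nat \<Rightarrow> real) \<Rightarrow> nat \<Rightarrow> real" where
  "dexp h mu m = (\<Prod>k<m. 1 + h * mu k)"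

definition S_k :: "real \<Rightarrow> nat \<Rightarrow> (nat \<Rightarrow> real) \<Rightarrow> nat \<Rightarrow> real" where
  "S_k h n mu k = (\<Sum>j=1..n. \<Prod>i<j. 1 / \<bar>1 + h * mu ((k + i) mod n)\<bar>)"

definition K0 :: "real \<Rightarrow> nat \<Rightarrow> (nat \<Rightarrow> real) \<Rightarrow> real" where
  "K0 h n mu = h * \<bar>dexp h mu n\<bar> / \<bar>1 - \<bar>dexp h mu n\<bar>\<bar> * Max ((S_k h n mu) ` {0..<n})"

definition HU_stable :: "((nat \<Rightarrow> real) \<Rightarrow> nat \<Rightarrow> real) \<Rightarrow> (nat \<Rightarrow> real) \<Rightarrow> real \<Rightarrow> bool" where
  "HU_stable L f K \<longleftrightarrow> K > 0 \<and>
     (\<forall>\<epsilon>>0. \<forall>\<xi>. (\<forall>m. \<bar>L \<xi> m - f m\<bar> \<le> \<epsilon>) \<longrightarrow>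
        (\<exists>y. (\<forall>m. L y m = f m) \<and> (\<forall>m. \<bar>\<xi> m - y m\<bar> \<le> K * \<epsilon>)))"

definition hill_op :: "real \<Rightarrow> (nat \<Rightarrow> real) \<Rightarrow> (nat \<Rightarrow> real) \<Rightarrow> nat \<Rightarrow> real" where
  "hill_op h lam y m = delta_h h (delta_h h y) m
      + (delta_h h lam m - lam m * lam (Suc m)) * y m"

end

theory Submission
  imports Defs
begin

definition SS :: "(nat\<Rightarrow>real) \<Rightarrow> nat \<Rightarrow> nat \<Rightarrow> real" where
  "SS a n k = (\<Sum>j=1..n. \<Prod>i<j. 1/\<bar>a (k+i)\<bar>)"

lemma per_add: fixes q :: nat assumes "\<forall>m. a (m+n) = a m" shows "a (m + q*n) = a m"
proof (induction q)
  case (Suc q)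
  have "m + Suc q * n = (m + q*n) + n" by simp
  then show ?case using Suc assms[rule_format, of "m+q*n"] by (simp only:)
qed simp

lemma per_mod: fixes m n :: nat assumes "\<forall>m. a (m+n) = a m" shows "a (m mod n) = a m"
  using per_add[OF assms, of "m mod n" "m div n"] by (metis mod_div_mult_eq)

lemma prod_shift:
  fixes a :: "nat \<Rightarrow> real"
  assumes "\<forall>m. a (m+n) = a m" "\<forall>m. a m \<noteq> 0"
  shows "(\<Prod>i<n. a (k+i)) = (\<Prod>i<n. a i)"
proof (induction k)
  case (Suc k)
  have e1: "(\<Prod>i<Suc n. a (k+i)) = a k * (\<Prod>i<n. a (Suc k + i))"
    by (simp add: prod.lessThan_Suc_shift del: prod.lessThan_Suc)
  have e2: "(\<Prod>i<Suc n. a (k+i)) = (\<Prod>i<n. a (k+i)) * a k"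
    using assms(1) by (simp add: add.commute)
  from e1 e2 assms(2) have "(\<Prod>i<n. a (Suc k + i)) = (\<Prod>i<n. a (k+i))"
    by (metis mult.commute mult_left_cancel)
  then show ?case using Suc by simp
qed simp

lemma SS_pos: "0 \<le> SS a n k"
  unfolding SS_def by (intro sum_nonneg prod_nonneg) auto

lemma SS_rec:
  fixes a :: "nat \<Rightarrow> real"
  assumes "\<forall>m. a (m+n) = a m" "\<forall>m. a m \<noteq> 0"
  shows "\<bar>a k\<bar> * SS a n k = 1 + SS a n (Suc k) - 1/\<bar>\<Prod>i<n. a i\<bar>"
proof -
  define b where "b x = 1/\<bar>a x\<bar>" for x
  define G where "G j = (\<Prod>i<j. b (Suc k + i))" for j
  have "SS a n k = (\<Sum>j<n. \<Prod>i<Suc j. b (k+i))"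
    unfolding SS_def b_def by (simp add: sum.atLeast1_atMost_eq)
  also have "\<dots> = (\<Sum>j<n. b k * G j)"
    unfolding G_def by (simp add: prod.lessThan_Suc_shift del: prod.lessThan_Suc)
  also have "\<dots> = b k * (\<Sum>j<n. G j)" by (simp add: sum_distrib_left)
  finally have s1: "SS a n k = b k * (\<Sum>j<n. G j)" .
  have "(\<Sum>j<n. G j) + G n = (\<Sum>j<Suc n. G j)" by simp
  also have "\<dots> = G 0 + (\<Sum>j<n. G (Suc j))" by (simp only: sum.lessThan_Suc_shift)
  also have "\<dots> = 1 + SS a n (Suc k)"
    unfolding SS_def G_def b_def by (simp add: sum.atLeast1_atMost_eq)
  finally have s2: "(\<Sum>j<n. G j) + G n = 1 + SS a n (Suc k)" .
  have "G n = 1 / \<bar>\<Prod>i<n. a (Suc k + i)\<bar>"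
    unfolding G_def b_def by (simp add: abs_prod prod_dividef)
  also have "\<dots> = 1/\<bar>\<Prod>i<n. a i\<bar>" using prod_shift[OF assms, of "Suc k"] by simp
  finally have s3: "G n = 1/\<bar>\<Prod>i<n. a i\<bar>" .
  have "\<bar>a k\<bar> * b k = 1" using assms(2) unfolding b_def by simp
  then have "\<bar>a k\<bar> * SS a n k = (\<Sum>j<n. G j)" using s1 by (simp add: mult.assoc[symmetric])
  then show ?thesis using s2 s3 by linarith
qed


primrec dseq :: "(nat\<Rightarrow>real) \<Rightarrow> (nat\<Rightarrow>real) \<Rightarrow> real \<Rightarrow> nat \<Rightarrow> real" where
  "dseq a r h 0 = 0"
| "dseq a r h (Suc m) = a m * dseq a r h m + h * r m"

lemma first_order:
  fixes a r :: "nat \<Rightarrow> real" and h \<epsilon> :: real and n :: nat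
  assumes per: "\<forall>m. a (m+n) = a m" and nz: "\<forall>m. a m \<noteq> 0"
    and P1: "\<bar>\<Prod>i<n. a i\<bar> \<noteq> 1" and h: "h > 0" and ep: "\<epsilon> \<ge> 0"
    and r: "\<forall>m. \<bar>r m\<bar> \<le> \<epsilon>"
  shows "\<exists>d. \<forall>m. d (Suc m) = a m * d m + h * r m \<and>
     \<bar>d m\<bar> \<le> h * \<epsilon> * (\<bar>\<Prod>i<n. a i\<bar> / \<bar>1 - \<bar>\<Prod>i<n. a i\<bar>\<bar>) * SS a n m"
proof -
  define P where "P = \<bar>\<Prod>i<n. a i\<bar>"
  define C where "C = P / \<bar>1 - P\<bar>"
  define W where "W m = C * SS a n m" for m
  have P0: "P > 0" unfolding P_def using nz by (simp add: prod_zero_iff)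
  have C0: "C \<ge> 0" unfolding C_def using P0 by simp
  have W0: "W m \<ge> 0" for m unfolding W_def using C0 SS_pos by simp
  have rec: "\<bar>a k\<bar> * SS a n k = 1 + SS a n (Suc k) - 1/P" for k
    using SS_rec[OF per nz] unfolding P_def by simp
  have goal: "\<exists>d. \<forall>m. d (Suc m) = a m * d m + h * r m \<and> \<bar>d m\<bar> \<le> h * \<epsilon> * W m"
  proof (cases "P < 1")
    case True
    have Wr: "W (Suc k) = \<bar>a k\<bar> * W k + 1" for k
    proof -
      have "\<bar>a k\<bar> * W k = C * (\<bar>a k\<bar> * SS a n k)" unfolding W_def by (simp add: ac_simps)
      also have "\<dots> = C * (1 + SS a n (Suc k) - 1/P)" by (simp only: rec)
      also have "\<dots> = W (Suc k) - 1" unfolding W_def C_def using True P0 by (simp add: field_simps)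
      finally show ?thesis by simp
    qed
    have "\<bar>dseq a r h m\<bar> \<le> h * \<epsilon> * W m" for m
    proof (induction m)
      case 0 then show ?case using W0 h ep by simp
    next
      case (Suc m)
      have "\<bar>dseq a r h (Suc m)\<bar> \<le> \<bar>a m\<bar> * \<bar>dseq a r h m\<bar> + h * \<bar>r m\<bar>"
        using h by (simp add: abs_mult) (metis abs_mult abs_of_pos abs_triangle_ineq h)
      also have "\<dots> \<le> \<bar>a m\<bar> * (h * \<epsilon> * W m) + h * \<epsilon>"
        using Suc r h by (intro add_mono mult_left_mono) auto
      also have "\<dots> = h * \<epsilon> * W (Suc m)" using Wr[of m] by (simp add: algebra_simps)
      finally show ?case .
    qed
    then show ?thesis by (intro exI[of _ "dseq a r h"]) simp
  next
    case False
    then have P1': "P > 1" using P1 unfolding P_def by simp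
    have Wr: "\<bar>a k\<bar> * W k = 1 + W (Suc k)" for k
    proof -
      have "\<bar>a k\<bar> * W k = C * (\<bar>a k\<bar> * SS a n k)" unfolding W_def by (simp add: ac_simps)
      also have "\<dots> = C * (1 + SS a n (Suc k) - 1/P)" by (simp only: rec)
      also have "\<dots> = 1 + W (Suc k)" unfolding W_def C_def using P1' by (simp add: field_simps)
      finally show ?thesis .
    qed
    define Pi where "Pi m l = (\<Prod>i<l. a (m+i))" for m l
    have Pinz: "Pi m l \<noteq> 0" for m l unfolding Pi_def using nz by (simp add: prod_zero_iff)
    have PiS: "Pi m (Suc (Suc j)) = a m * Pi (Suc m) (Suc j)" for m j
      unfolding Pi_def by (simp only: prod.lessThan_Suc_shift) simp
    have Pi1: "Pi m (Suc 0) = a m" for m unfolding Pi_def by simp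
    define g where "g m j = 1 / \<bar>Pi m (Suc j)\<bar>" for m j
    define f where "f m j = r (m+j) / Pi m (Suc j)" for m j
    have g0: "g m j \<ge> 0" for m j unfolding g_def by simp
    have partial: "(\<Sum>j<N. g m j) \<le> W m" for N m
    proof (induction N arbitrary: m)
      case 0 then show ?case using W0 by simp
    next
      case (Suc N)
      have "(\<Sum>j<Suc N. g m j) = g m 0 + (\<Sum>j<N. g m (Suc j))" by (simp only: sum.lessThan_Suc_shift)
      also have "\<dots> = (1 + (\<Sum>j<N. g (Suc m) j)) / \<bar>a m\<bar>"
        unfolding g_def PiS Pi1 by (simp add: abs_mult sum_divide_distrib add_divide_distrib mult.commute)
      also have "\<dots> \<le> (1 + W (Suc m)) / \<bar>a m\<bar>"
        using Suc.IH[of "Suc m"] by (intro divide_right_mono) auto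
      also have "\<dots> = W m" using Wr[of m] nz by (simp add: field_simps)
      finally show ?case .
    qed
    have sg: "summable (g m)" for m
      by (rule summableI_nonneg_bounded[OF g0 partial])
    have sf: "summable (f m)" for m
    proof (rule summable_comparison_test)
      show "\<exists>N. \<forall>j\<ge>N. norm (f m j) \<le> \<epsilon> * g m j"
        using r unfolding f_def g_def by (auto simp: abs_divide divide_right_mono)
      show "summable (\<lambda>j. \<epsilon> * g m j)" using sg by (rule summable_mult)
    qed
    define D where "D m = - h * suminf (f m)" for m
    have Drec: "D (Suc m) = a m * D m + h * r m" for m
    proof -
      have "(\<Sum>j. f m (Suc j)) = suminf (f m) - f m 0" by (rule suminf_split_head[OF sf])
      moreover have "(\<lambda>j. f m (Suc j)) = (\<lambda>j. f (Suc m) j / a m)"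
        unfolding f_def PiS by auto
      moreover have "(\<Sum>j. f (Suc m) j / a m) = suminf (f (Suc m)) / a m"
        by (rule suminf_divide[OF sf])
      moreover have "f m 0 = r m / a m" unfolding f_def Pi1 by simp
      ultimately have "suminf (f (Suc m)) / a m = suminf (f m) - r m / a m" by simp
      then have "suminf (f (Suc m)) = a m * suminf (f m) - r m" using nz by (simp add: field_simps)
      then show ?thesis unfolding D_def by (simp add: algebra_simps) (metis distrib_left)
    qed
    have Dbd: "\<bar>D m\<bar> \<le> h * \<epsilon> * W m" for m
    proof -
      have pb: "\<bar>\<Sum>j<N. f m j\<bar> \<le> \<epsilon> * W m" for N
      proof -
        have "\<bar>\<Sum>j<N. f m j\<bar> \<le> (\<Sum>j<N. \<bar>f m j\<bar>)" by (rule sum_abs)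
        also have "\<dots> \<le> (\<Sum>j<N. \<epsilon> * g m j)"
          using r unfolding f_def g_def by (intro sum_mono) (auto simp: abs_divide divide_right_mono)
        also have "\<dots> = \<epsilon> * (\<Sum>j<N. g m j)" by (simp add: sum_distrib_left)
        also have "\<dots> \<le> \<epsilon> * W m" using partial ep by (intro mult_left_mono) auto
        finally show ?thesis .
      qed
      have u: "suminf (f m) \<le> \<epsilon> * W m"
        using pb by (intro suminf_le_const[OF sf]) (auto simp: abs_le_iff)
      have "suminf (\<lambda>j. - f m j) \<le> \<epsilon> * W m"
        using pb by (intro suminf_le_const summable_minus[OF sf]) (auto simp: abs_le_iff sum_negf)
      then have l: "- suminf (f m) \<le> \<epsilon> * W m" using suminf_minus[OF sf] by simp
      have "\<bar>suminf (f m)\<bar> \<le> \<epsilon> * W m" using u l by simp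
      then show ?thesis unfolding D_def using h by (simp add: abs_mult mult.assoc)
    qed
    show ?thesis using Drec Dbd by blast
  qed
  then show ?thesis unfolding W_def C_def P_def by (simp add: mult.assoc)
qed


lemma hill_id:
  assumes "h \<noteq> 0"
  shows "delta_h h x (Suc m) + lam (Suc m) * x (Suc m)
     = (1 + h * lam (Suc m)) * (delta_h h x m + lam m * x m) + h * hill_op h lam x m"
  using assms unfolding hill_op_def delta_h_def by (simp add: field_simps)

lemma SS_posit:
  fixes a :: "nat \<Rightarrow> real"
  assumes "n \<ge> 1" "\<forall>m. a m \<noteq> 0"
  shows "SS a n k > 0"
  unfolding SS_def using assms by (intro sum_pos prod_pos) auto

lemma S_k_mod: "S_k h n mu k = S_k h n mu (k mod n)"
  unfolding S_k_def by (simp add: mod_add_left_eq)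

lemma S_k_le_Max:
  assumes "n \<ge> 1"
  shows "S_k h n mu k \<le> Max ((S_k h n mu) ` {0..<n})"
  using assms by (subst S_k_mod) (intro Max_ge, auto)

theorem theorem3p2:
  fixes h :: real and n :: nat and lam :: "nat \<Rightarrow> real"
  assumes "h > 0"
    and "is_n_cycle n lam"
    and "\<And>m. lam m \<noteq> 1 / h \<and> lam m \<noteq> - (1 / h)"
    and "0 < \<bar>dexp h lam n\<bar>" and "\<bar>dexp h lam n\<bar> \<noteq> 1"
    and "0 < \<bar>dexp h (\<lambda>m. - lam m) n\<bar>" and "\<bar>dexp h (\<lambda>m. - lam m) n\<bar> \<noteq> 1"
  shows "HU_stable (hill_op h lam) (\<lambda>_. 0)
           (K0 h n lam * K0 h n (\<lambda>m. - lam m))"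
proof -
  note h = assms(1)
  have n1: "n \<ge> 1" and perl: "\<forall>m. lam (m+n) = lam m"
    using assms(2) unfolding is_n_cycle_def by auto
  define a0 where "a0 m = 1 + h * lam m" for m
  define a1 where "a1 m = 1 + h * lam (Suc m)" for m
  define a2 where "a2 m = 1 - h * lam m" for m
  have nz0: "\<forall>m. a0 m \<noteq> 0"
  proof
    fix m show "a0 m \<noteq> 0" using assms(3)[of m] h unfolding a0_def by (auto simp: field_simps)
  qed
  have nz1: "\<forall>m. a1 m \<noteq> 0" using nz0 unfolding a0_def a1_def by simp
  have nz2: "\<forall>m. a2 m \<noteq> 0"
  proof
    fix m show "a2 m \<noteq> 0" using assms(3)[of m] h unfolding a2_def by (auto simp: field_simps)
  qed
  have per0: "\<forall>m. a0 (m+n) = a0 m" using perl unfolding a0_def by simp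
  have per1: "\<forall>m. a1 (m+n) = a1 m" using perl unfolding a1_def by (metis add_Suc)
  have per2: "\<forall>m. a2 (m+n) = a2 m" using perl unfolding a2_def by simp
  have lmod: "lam (k mod n) = lam k" for k by (rule per_mod[OF perl])
  have P0: "dexp h lam n = (\<Prod>i<n. a0 i)" unfolding dexp_def a0_def ..
  have P1: "(\<Prod>i<n. a1 i) = (\<Prod>i<n. a0 i)"
    using prod_shift[OF per0 nz0, of 1] unfolding a1_def a0_def by simp
  have P2: "dexp h (\<lambda>m. - lam m) n = (\<Prod>i<n. a2 i)" unfolding dexp_def a2_def by simp
  have Sk0: "S_k h n lam k = SS a0 n k" for k unfolding S_k_def SS_def a0_def lmod ..
  have Sk2: "S_k h n (\<lambda>m. - lam m) k = SS a2 n k" for k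
    unfolding S_k_def SS_def a2_def lmod by simp
  define M0 where "M0 = Max ((S_k h n lam) ` {0..<n})"
  define M2 where "M2 = Max ((S_k h n (\<lambda>m. - lam m)) ` {0..<n})"
  have SS0M: "SS a0 n k \<le> M0" for k using S_k_le_Max[OF n1] Sk0 unfolding M0_def by metis
  have SS2M: "SS a2 n k \<le> M2" for k using S_k_le_Max[OF n1] Sk2 unfolding M2_def by metis
  have SS1: "SS a1 n k = SS a0 n (Suc k)" for k unfolding SS_def a1_def a0_def by simp
  define Q0 where "Q0 = \<bar>\<Prod>i<n. a0 i\<bar>"
  define Q2 where "Q2 = \<bar>\<Prod>i<n. a2 i\<bar>"
  define K1 where "K1 = h * Q0 / \<bar>1 - Q0\<bar> * M0"
  define K2 where "K2 = h * Q2 / \<bar>1 - Q2\<bar> * M2"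
  have K1e: "K0 h n lam = K1" unfolding K0_def K1_def Q0_def M0_def P0 ..
  have K2e: "K0 h n (\<lambda>m. - lam m) = K2" unfolding K0_def K2_def Q2_def M2_def P2 ..
  have Q0p: "Q0 > 0" "Q0 \<noteq> 1" using assms(4,5) unfolding Q0_def P0 by auto
  have Q2p: "Q2 > 0" "Q2 \<noteq> 1" using assms(6,7) unfolding Q2_def P2 by auto
  have M0p: "M0 > 0" using SS0M[of 0] SS_posit[OF n1 nz0, of 0] by simp
  have M2p: "M2 > 0" using SS2M[of 0] SS_posit[OF n1 nz2, of 0] by simp
  have K1p: "K1 > 0" unfolding K1_def using h Q0p M0p by simp
  have K2p: "K2 > 0" unfolding K2_def using h Q2p M2p by simp
  show ?thesis
    unfolding HU_stable_def K1e K2e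
  proof (intro conjI allI impI)
    show "K1 * K2 > 0" using K1p K2p by simp
    fix \<epsilon> :: real and \<xi> :: "nat \<Rightarrow> real"
    assume ep: "\<epsilon> > 0" and hx: "\<forall>m. \<bar>hill_op h lam \<xi> m - 0\<bar> \<le> \<epsilon>"
    define v where "v m = delta_h h \<xi> m + lam m * \<xi> m" for m
    define g where "g m = hill_op h lam \<xi> m" for m
    have vrec: "v (Suc m) = a1 m * v m + h * g m" for m
      unfolding v_def g_def a1_def using hill_id[where h=h and x=\<xi> and lam=lam and m=m] h by simp
    obtain d1 where d1: "\<forall>m. d1 (Suc m) = a1 m * d1 m + h * g m \<and>
       \<bar>d1 m\<bar> \<le> h * \<epsilon> * (\<bar>\<Prod>i<n. a1 i\<bar> / \<bar>1 - \<bar>\<Prod>i<n. a1 i\<bar>\<bar>) * SS a1 n m"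
      using first_order[OF per1 nz1, of h \<epsilon> g] P1 Q0p h ep hx unfolding Q0_def g_def
      by auto
    define \<epsilon>2 where "\<epsilon>2 = K1 * \<epsilon>"
    have d1b: "\<bar>d1 m\<bar> \<le> \<epsilon>2" for m
    proof -
      have "\<bar>d1 m\<bar> \<le> h * \<epsilon> * (Q0 / \<bar>1 - Q0\<bar>) * SS a1 n m"
        using d1 P1 unfolding Q0_def by simp
      also have "\<dots> \<le> h * \<epsilon> * (Q0 / \<bar>1 - Q0\<bar>) * M0"
        using SS0M[of "Suc m"] SS1[of m] h ep Q0p by (intro mult_left_mono) auto
      also have "\<dots> = \<epsilon>2" unfolding \<epsilon>2_def K1_def by simp
      finally show ?thesis .
    qed
    define u where "u m = v m - d1 m" for m
    have urec: "u (Suc m) = a1 m * u m" for m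
      unfolding u_def using vrec[of m] d1 by (simp add: algebra_simps)
    have xrec: "\<xi> (Suc m) = a2 m * \<xi> m + h * v m" for m
      unfolding a2_def v_def delta_h_def using h by (simp add: field_simps)
    obtain d2 where d2: "\<forall>m. d2 (Suc m) = a2 m * d2 m + h * d1 m \<and>
       \<bar>d2 m\<bar> \<le> h * \<epsilon>2 * (\<bar>\<Prod>i<n. a2 i\<bar> / \<bar>1 - \<bar>\<Prod>i<n. a2 i\<bar>\<bar>) * SS a2 n m"
      using first_order[OF per2 nz2, of h \<epsilon>2 d1] Q2p h ep K1p d1b unfolding Q2_def \<epsilon>2_def
      by auto
    define y where "y m = \<xi> m - d2 m" for m
    have yrec: "y (Suc m) = a2 m * y m + h * u m" for m
      unfolding y_def u_def using xrec[of m] d2 by (simp add: algebra_simps)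
    have yw: "delta_h h y m + lam m * y m = u m" for m
      unfolding delta_h_def using yrec[of m] h unfolding a2_def by (simp add: field_simps)
    have "hill_op h lam y m = 0" for m
    proof -
      have "u (Suc m) = a1 m * u m + h * hill_op h lam y m"
        using hill_id[where h=h and x=y and lam=lam and m=m] h unfolding yw a1_def by simp
      then show ?thesis using urec[of m] h by simp
    qed
    moreover have "\<bar>\<xi> m - y m\<bar> \<le> K1 * K2 * \<epsilon>" for m
    proof -
      have "\<bar>\<xi> m - y m\<bar> = \<bar>d2 m\<bar>" unfolding y_def by simp
      also have "\<dots> \<le> h * \<epsilon>2 * (Q2 / \<bar>1 - Q2\<bar>) * SS a2 n m"
        using d2 unfolding Q2_def by simp
      also have "\<dots> \<le> h * \<epsilon>2 * (Q2 / \<bar>1 - Q2\<bar>) * M2"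
        using SS2M[of m] h ep K1p Q2p unfolding \<epsilon>2_def by (intro mult_left_mono) auto
      also have "\<dots> = K1 * K2 * \<epsilon>" unfolding \<epsilon>2_def K2_def by (simp add: ac_simps)
      finally show ?thesis .
    qed
    ultimately show "\<exists>y. (\<forall>m. hill_op h lam y m = 0) \<and> (\<forall>m. \<bar>\<xi> m - y m\<bar> \<le> K1 * K2 * \<epsilon>)"
      by blast
  qed
qed

end
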